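(* Let $(B,\lfloor\cdot,\cdot\rfloor)$ be an SSD space with quadratic form $q$ and let $A\subset B$ be $q$-positive. Then $\mathcal{P}_q(\Phi_A^{@})$ is the smallest $q$-representable subset of $B$ containing $A$.
   Context: An SSD space is a pair $(B,\lfloor\cdot,\cdot\rfloor)$ with $B$ a nonzero real vector space and $\lfloor\cdot,\cdot\rfloor$ a symmetric bilinear form; $q(b)=\frac12\lfloor b,b\rfloor$. $w(B,B)$ is the coarsest topology on $B$ making all maps $b\mapsto\lfloor b,c\rfloor$ continuous. A nonempty $A\subset B$ is $q$-positive if $q(b-c)\ge0$ for all $b,c\in A$. $\Phi_A(x)=\sup_{a\in A}\{\lfloor x,a\rfloor-q(a)\}$. For proper convex $f$, $f^{@}(b)=\sup_{c\in B}\{\lfloor c,b\rfloor-f(c)\}$ and $\mathcal{P}_q(f)=\{b: f(b)=q(b)\}$. A $q$-positive set $A$ is $q$-representable if there is a $w(B,B)$-lower semicontinuous proper convex $f:B\to\mathbb{R}\cup\{+\infty\}$ with $f\ge q$ on $B$ and $\mathcal{P}_q(f)=A$. *)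

theory Defs
  imports "HOL-Analysis.Analysis"
begin

definition sym_bilinear :: "('b::real_vector \<Rightarrow> 'b \<Rightarrow> real) \<Rightarrow> bool" where
  "sym_bilinear s \<longleftrightarrow> (\<forall>x y. s x y = s y x) \<and> (\<forall>c. linear (\<lambda>x. s x c))"

definition SSD_space :: "('b::real_vector \<Rightarrow> 'b \<Rightarrow> real) \<Rightarrow> bool" where
  "SSD_space s \<longleftrightarrow> (\<exists>b::'b. b \<noteq> 0) \<and> sym_bilinear s"

definition qf :: "('b \<Rightarrow> 'b \<Rightarrow> real) \<Rightarrow> 'b \<Rightarrow> real" where
  "qf s b = s b b / 2"

definition wBB :: "('b \<Rightarrow> 'b \<Rightarrow> real) \<Rightarrow> 'b topology" where
  "wBB s = topology_generated_by {(\<lambda>b. s b c) -` U | c U. open U}"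

definition q_positive :: "('b::real_vector \<Rightarrow> 'b \<Rightarrow> real) \<Rightarrow> 'b set \<Rightarrow> bool" where
  "q_positive s A \<longleftrightarrow> A \<noteq> {} \<and> (\<forall>b\<in>A. \<forall>c\<in>A. qf s (b - c) \<ge> 0)"

definition Phi :: "('b \<Rightarrow> 'b \<Rightarrow> real) \<Rightarrow> 'b set \<Rightarrow> 'b \<Rightarrow> ereal" where
  "Phi s A x = (SUP a\<in>A. ereal (s x a - qf s a))"

definition conj_at :: "('b \<Rightarrow> 'b \<Rightarrow> real) \<Rightarrow> ('b \<Rightarrow> ereal) \<Rightarrow> 'b \<Rightarrow> ereal" where
  "conj_at s f b = (SUP c. ereal (s c b) - f c)"

definition Pq :: "('b \<Rightarrow> 'b \<Rightarrow> real) \<Rightarrow> ('b \<Rightarrow> ereal) \<Rightarrow> 'b set" where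
  "Pq s f = {b. f b = ereal (qf s b)}"

definition proper_convex :: "('b::real_vector \<Rightarrow> ereal) \<Rightarrow> bool" where
  "proper_convex f \<longleftrightarrow> (\<forall>x. f x \<noteq> -\<infinity>) \<and> (\<exists>x. f x \<noteq> \<infinity>) \<and>
     (\<forall>x y t. 0 < t \<and> t < 1 \<longrightarrow>
        f (t *\<^sub>R x + (1 - t) *\<^sub>R y) \<le> ereal t * f x + ereal (1 - t) * f y)"

definition lsc_on :: "'b topology \<Rightarrow> ('b \<Rightarrow> ereal) \<Rightarrow> bool" where
  "lsc_on T f \<longleftrightarrow> (\<forall>t::real. closedin T {x \<in> topspace T. f x \<le> ereal t})"

definition q_representable :: "('b::real_vector \<Rightarrow> 'b \<Rightarrow> real) \<Rightarrow> 'b set \<Rightarrow> bool" where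
  "q_representable s A \<longleftrightarrow> q_positive s A \<and>
     (\<exists>f. lsc_on (wBB s) f \<and> proper_convex f \<and> (\<forall>b. f b \<ge> ereal (qf s b)) \<and> Pq s f = A)"

end

theory Submission
  imports Defs
begin


fun lc :: "('v \<Rightarrow> real) list \<Rightarrow> real list \<Rightarrow> 'v \<Rightarrow> real" where
  "lc (L#Ls) (w#ws) x = w * L x + lc Ls ws x"
| "lc _ _ x = 0"

lemma lc_linear: "\<forall>L\<in>set Ls. linear L \<Longrightarrow> linear (lc Ls ws)"
proof (induction Ls arbitrary: ws)
  case Nil
  have "lc [] ws = (\<lambda>x. 0)" by (rule ext) simp
  then show ?case by (simp add: linear_iff)
next
  case (Cons L Ls)
  show ?case
  proof (cases ws)
    case Nil
    have "lc (L # Ls) [] = (\<lambda>x. 0)" by (rule ext) simp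
    then show ?thesis using Nil by (simp add: linear_iff)
  next
    case (Cons w ws')
    from Cons.prems have a: "linear L" "linear (lc Ls ws')" using Cons.IH by auto
    have "linear (\<lambda>x. w * L x + lc Ls ws' x)"
      unfolding linear_iff
    proof (intro conjI allI)
      fix x y :: 'a and c :: real
      show "w * L (x + y) + lc Ls ws' (x + y) = w * L x + lc Ls ws' x + (w * L y + lc Ls ws' y)"
        using linear_add[OF a(1), of x y] linear_add[OF a(2), of x y] by (simp add: distrib_left)
      show "w * L (c *\<^sub>R x) + lc Ls ws' (c *\<^sub>R x) = c *\<^sub>R (w * L x + lc Ls ws' x)"
        using linear_scale[OF a(1), of c x] linear_scale[OF a(2), of c x] by (simp add: distrib_left)
    qed
    then show ?thesis using Cons by simp
  qed
qed

lemma cross_ineq: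
  fixes L \<phi> :: "'v::real_vector \<Rightarrow> real"
  assumes lL: "linear L" and lp: "linear \<phi>" and cK: "convex K"
    and H: "\<forall>x\<in>K. \<bar>L x\<bar> < \<epsilon> \<longrightarrow> 1 \<le> \<phi> x" and e: "\<epsilon> > 0"
    and x1: "x1 \<in> K" "L x1 > 0" and x2: "x2 \<in> K" "L x2 < 0"
  shows "(1 - \<phi> x1) / L x1 \<le> (\<phi> x2 - 1) / (- L x2)"
proof -
  define t1 where "t1 = L x1"
  define t2 where "t2 = L x2"
  have t1: "t1 > 0" and t2: "t2 < 0" using x1 x2 by (auto simp: t1_def t2_def)
  define u where "u = t1 / (t1 - t2)"
  define v where "v = - t2 / (t1 - t2)"
  have d12: "t1 - t2 \<noteq> 0" using t1 t2 by simp
  have "u + v = (t1 + - t2) / (t1 - t2)" unfolding u_def v_def by (simp only: add_divide_distrib[symmetric])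
  then have "u + v = 1" using d12 by simp
  moreover have "u \<ge> 0" unfolding u_def by (rule divide_nonneg_pos) (use t1 t2 in auto)
  moreover have "v \<ge> 0" unfolding v_def by (rule divide_nonneg_pos) (use t1 t2 in auto)
  ultimately have uv: "u \<ge> 0" "v \<ge> 0" "u + v = 1" by auto
  define z where "z = u *\<^sub>R x2 + v *\<^sub>R x1"
  have zK: "z \<in> K" using cK x1 x2 uv unfolding z_def convex_def by blast
  have "L z = u * t2 + v * t1" using lL unfolding z_def t1_def t2_def
    by (simp add: linear_add linear_scale)
  also have "\<dots> = (t1 * t2 + (- t2) * t1) / (t1 - t2)" unfolding u_def v_def
    by (simp add: add_divide_distrib)
  also have "\<dots> = 0" by simp
  finally have Lz: "L z = 0" .
  have "\<phi> z = u * \<phi> x2 + v * \<phi> x1" using lp unfolding z_def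
    by (simp add: linear_add linear_scale)
  moreover have "1 \<le> \<phi> z" using H zK Lz e by auto
  ultimately have "1 \<le> u * \<phi> x2 + v * \<phi> x1" by simp
  then have "(t1 - t2) * 1 \<le> (t1 - t2) * (u * \<phi> x2 + v * \<phi> x1)" using t1 t2
    by (intro mult_left_mono) auto
  moreover have "(t1 - t2) * (u * \<phi> x2 + v * \<phi> x1) = t1 * \<phi> x2 - t2 * \<phi> x1"
  proof -
    have d: "t1 - t2 \<noteq> 0" using t1 t2 by simp
    have a: "(t1 - t2) * u = t1" unfolding u_def using d by simp
    have b: "(t1 - t2) * v = - t2" unfolding v_def using d by simp
    have "(t1 - t2) * (u * \<phi> x2 + v * \<phi> x1) = ((t1 - t2) * u) * \<phi> x2 + ((t1 - t2) * v) * \<phi> x1"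
      by (simp add: algebra_simps)
    then show ?thesis unfolding a b by simp
  qed
  ultimately have "t1 - t2 \<le> t1 * \<phi> x2 - t2 * \<phi> x1" by simp
  then have "(- t2) * (1 - \<phi> x1) \<le> t1 * (\<phi> x2 - 1)" by (simp add: algebra_simps)
  then have C: "(- t2) * (1 - \<phi> x1) / (t1 * (- t2)) \<le> t1 * (\<phi> x2 - 1) / (t1 * (- t2))"
    by (rule divide_right_mono) (use mult_pos_neg[OF t1 t2] in simp)
  have "(1 - \<phi> x1) / t1 = (- t2) * (1 - \<phi> x1) / (t1 * (- t2))" using t1 t2 by simp
  moreover have "(\<phi> x2 - 1) / (- t2) = t1 * (\<phi> x2 - 1) / (t1 * (- t2))" using t1 t2 by simp
  ultimately show ?thesis using C unfolding t1_def t2_def by simp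
qed

lemma lam_exists:
  fixes L \<phi> :: "'v::real_vector \<Rightarrow> real"
  assumes lL: "linear L" and lp: "linear \<phi>" and cK: "convex K"
    and H: "\<forall>x\<in>K. \<bar>L x\<bar> < \<epsilon> \<longrightarrow> 1 \<le> \<phi> x" and e: "\<epsilon> > 0"
    and B1: "\<forall>x\<in>K. 0 < L x \<longrightarrow> (1 - \<phi> x) / L x \<le> M1"
    and B2: "\<forall>x\<in>K. L x < 0 \<longrightarrow> M2 \<le> (\<phi> x - 1) / (- L x)"
  shows "\<exists>lam. \<forall>x\<in>K. 1 \<le> lam * L x + \<phi> x"
proof -
  define S1 where "S1 = {(1 - \<phi> x) / L x | x. x \<in> K \<and> 0 < L x}"
  define S2 where "S2 = {(\<phi> x - 1) / (- L x) | x. x \<in> K \<and> L x < 0}"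
  have cr: "\<And>a b. a \<in> S1 \<Longrightarrow> b \<in> S2 \<Longrightarrow> a \<le> b"
    unfolding S1_def S2_def using cross_ineq[OF lL lp cK H e] by blast
  have bd1: "bdd_above S1" unfolding S1_def bdd_above_def using B1 by blast
  have bd2: "bdd_below S2" unfolding S2_def bdd_below_def using B2 by blast
  define lam where "lam = (if S1 \<noteq> {} then Sup S1 else if S2 \<noteq> {} then Inf S2 else 0)"
  have l1: "a \<le> lam" if "a \<in> S1" for a
    using that bd1 cSup_upper unfolding lam_def by auto
  have l2: "lam \<le> b" if "b \<in> S2" for b
  proof (cases "S1 = {}")
    case True
    then show ?thesis using that bd2 cInf_lower unfolding lam_def by auto
  next
    case False
    then show ?thesis using that cr unfolding lam_def by (auto intro: cSup_least)
  qed
  have "1 \<le> lam * L x + \<phi> x" if xK: "x \<in> K" for x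
  proof (cases "L x > 0")
    case True
    then have "(1 - \<phi> x) / L x \<le> lam" using l1 xK unfolding S1_def by blast
    then show ?thesis using True by (simp add: divide_simps)
  next
    case False
    show ?thesis
    proof (cases "L x < 0")
      case True
      then have "lam \<le> (\<phi> x - 1) / (- L x)" using l2 xK unfolding S2_def by blast
      then have "lam * (- L x) \<le> \<phi> x - 1" using True by (simp add: divide_simps)
      then show ?thesis by (simp add: algebra_simps)
    next
      case False2: False
      then have "L x = 0" using False by simp
      then show ?thesis using H xK e by simp
    qed
  qed
  then show ?thesis by blast
qed

lemma bound1:
  fixes L \<phi> :: "'v::real_vector \<Rightarrow> real"
  assumes lL: "linear L" and lp: "linear \<phi>" and cK: "convex K"
    and H: "\<forall>x\<in>K. \<bar>L x\<bar> < \<epsilon> \<longrightarrow> 1 \<le> \<phi> x" and e: "\<epsilon> > 0"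
    and y0: "y0 \<in> K" "\<bar>L y0\<bar> < \<epsilon>"
  shows "\<exists>M. \<forall>x\<in>K. 0 < L x \<longrightarrow> (1 - \<phi> x) / L x \<le> M"
proof -
  define t0 where "t0 = L y0"
  define g0 where "g0 = \<phi> y0 - 1"
  have g0: "g0 \<ge> 0" using H y0 by (simp add: g0_def)
  have t0: "\<bar>t0\<bar> < \<epsilon>" using y0 by (simp add: t0_def)
  have "(1 - \<phi> x) / L x \<le> 4 * g0 / (\<epsilon> - t0)" if xK: "x \<in> K" and pos: "0 < L x" for x
  proof (cases "L x < \<epsilon>")
    case True
    then have "1 \<le> \<phi> x" using H xK pos by auto
    then have "(1 - \<phi> x) / L x \<le> 0" using pos by (simp add: divide_simps)
    also have "0 \<le> 4 * g0 / (\<epsilon> - t0)" using g0 t0 by simp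
    finally show ?thesis .
  next
    case False
    define t1 where "t1 = L x"
    have t1: "t1 \<ge> \<epsilon>" using False by (simp add: t1_def)
    define sg where "sg = (\<epsilon> - t0) / (2 * (t1 - t0))"
    have sg: "0 < sg" "sg \<le> 1" using t0 t1 by (auto simp: sg_def field_simps)
    define z where "z = (1 - sg) *\<^sub>R y0 + sg *\<^sub>R x"
    have zK: "z \<in> K" using cK y0 xK sg unfolding z_def convex_def by auto
    have "L z = (1 - sg) * t0 + sg * t1" using lL unfolding z_def t0_def t1_def
      by (simp add: linear_add linear_scale)
    also have "\<dots> = t0 + sg * (t1 - t0)" by (simp add: algebra_simps)
    also have "sg * (t1 - t0) = (\<epsilon> - t0) / 2"
    proof -
      have d: "t1 - t0 \<noteq> 0" using t0 t1 by simp
      show ?thesis unfolding sg_def using d by (simp add: field_simps)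
    qed
    also have "t0 + (\<epsilon> - t0) / 2 = (t0 + \<epsilon>) / 2" by (simp add: field_simps)
    finally have "\<bar>L z\<bar> < \<epsilon>" using t0 by simp
    then have "1 \<le> \<phi> z" using H zK by auto
    moreover have "\<phi> z = (1 - sg) * \<phi> y0 + sg * \<phi> x" using lp unfolding z_def
      by (simp add: linear_add linear_scale)
    ultimately have "1 \<le> (1 - sg) * \<phi> y0 + sg * \<phi> x" by simp
    then have "sg * (1 - \<phi> x) \<le> (1 - sg) * g0" by (simp add: g0_def algebra_simps)
    also have "\<dots> \<le> g0" using sg g0 by (simp add: mult_left_le_one_le mult_le_cancel_right1)
    finally have "1 - \<phi> x \<le> g0 / sg" using sg by (simp add: divide_simps mult.commute)
    also have "\<dots> = 2 * g0 * (t1 - t0) / (\<epsilon> - t0)" using t0 t1 by (simp add: sg_def field_simps)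
    finally have A: "1 - \<phi> x \<le> 2 * g0 * (t1 - t0) / (\<epsilon> - t0)" .
    have "(1 - \<phi> x) / t1 \<le> (2 * g0 * (t1 - t0) / (\<epsilon> - t0)) / t1"
      by (rule divide_right_mono[OF A]) (use t1 e in simp)
    also have "\<dots> = (2 * g0 / (\<epsilon> - t0)) * ((t1 - t0) / t1)" by simp
    also have "\<dots> \<le> (2 * g0 / (\<epsilon> - t0)) * 2"
    proof (rule mult_left_mono)
      show "(t1 - t0) / t1 \<le> 2" using t1 t0 e by (simp add: divide_simps)
      show "0 \<le> 2 * g0 / (\<epsilon> - t0)" using g0 t0 by simp
    qed
    finally show ?thesis by (simp add: t1_def)
  qed
  then show ?thesis by blast
qed

lemma box_sep:
  fixes Ls :: "('v::real_vector \<Rightarrow> real) list"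
  assumes "\<forall>L\<in>set Ls. linear L" "convex K" "\<epsilon> > 0" "\<forall>x\<in>K. \<exists>L\<in>set Ls. \<epsilon> \<le> \<bar>L x\<bar>"
  shows "\<exists>ws. \<forall>x\<in>K. 1 \<le> lc Ls ws x"
  using assms
proof (induction Ls arbitrary: K)
  case Nil
  then show ?case by auto
next
  case (Cons L Ls)
  have lL: "linear L" and lLs: "\<forall>L\<in>set Ls. linear L" using Cons.prems by auto
  have e: "\<epsilon> > 0" using Cons.prems by auto
  have cK: "convex K" using Cons.prems by auto
  define K' where "K' = {x\<in>K. \<bar>L x\<bar> < \<epsilon>}"
  have cK': "convex K'"
    unfolding K'_def convex_def
  proof (intro ballI allI impI)
    fix x y and u v :: real
    assume x: "x \<in> {x \<in> K. \<bar>L x\<bar> < \<epsilon>}" and y: "y \<in> {x \<in> K. \<bar>L x\<bar> < \<epsilon>}"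
      and uv: "0 \<le> u" "0 \<le> v" "u + v = 1"
    have "u *\<^sub>R x + v *\<^sub>R y \<in> K" using cK x y uv unfolding convex_def by blast
    moreover have "\<bar>L (u *\<^sub>R x + v *\<^sub>R y)\<bar> < \<epsilon>"
    proof -
      have "\<bar>L (u *\<^sub>R x + v *\<^sub>R y)\<bar> = \<bar>u * L x + v * L y\<bar>" using lL by (simp add: linear_add linear_scale)
      also have "\<dots> \<le> u * \<bar>L x\<bar> + v * \<bar>L y\<bar>" using uv by (simp add: abs_triangle_ineq[THEN order_trans] abs_mult)
      also have "\<dots> < \<epsilon>"
      proof -
        have "u * \<bar>L x\<bar> \<le> u * \<epsilon>" "v * \<bar>L y\<bar> \<le> v * \<epsilon>" using x y uv by (auto intro: mult_left_mono)
        moreover have "u * \<bar>L x\<bar> < u * \<epsilon> \<or> v * \<bar>L y\<bar> < v * \<epsilon>" using x y uv by (cases "u = 0") auto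
        ultimately have "u * \<bar>L x\<bar> + v * \<bar>L y\<bar> < u * \<epsilon> + v * \<epsilon>" by auto
        also have "\<dots> = \<epsilon>" using uv by (simp add: distrib_right[symmetric])
        finally show ?thesis .
      qed
      finally show ?thesis .
    qed
    ultimately show "u *\<^sub>R x + v *\<^sub>R y \<in> {x \<in> K. \<bar>L x\<bar> < \<epsilon>}" by simp
  qed
  have "\<forall>x\<in>K'. \<exists>L\<in>set Ls. \<epsilon> \<le> \<bar>L x\<bar>" using Cons.prems(4) unfolding K'_def by force
  then obtain ws' where ws': "\<forall>x\<in>K'. 1 \<le> lc Ls ws' x" using Cons.IH[OF lLs cK' e] by blast
  define ws'' where "ws'' = (if K' = {} then [] else ws')"
  define \<phi> where "\<phi> = lc Ls ws''"
  have lp: "linear \<phi>" unfolding \<phi>_def using lc_linear[OF lLs] .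
  have H: "\<forall>x\<in>K. \<bar>L x\<bar> < \<epsilon> \<longrightarrow> 1 \<le> \<phi> x"
    using ws' unfolding \<phi>_def ws''_def K'_def by auto
  have "\<exists>M1. \<forall>x\<in>K. 0 < L x \<longrightarrow> (1 - \<phi> x) / L x \<le> M1"
  proof (cases "K' = {}")
    case True
    have "(1 - \<phi> x) / L x \<le> 1 / \<epsilon>" if "x \<in> K" "0 < L x" for x
    proof -
      have "\<phi> x = 0" using True unfolding \<phi>_def ws''_def by (cases Ls) auto
      moreover have "\<epsilon> \<le> L x" using True that unfolding K'_def by auto
      ultimately show ?thesis using e by (simp add: frac_le)
    qed
    then show ?thesis by blast
  next
    case False
    then obtain y0 where "y0 \<in> K" "\<bar>L y0\<bar> < \<epsilon>" unfolding K'_def by auto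
    then show ?thesis using bound1[OF lL lp cK H e] by blast
  qed
  then obtain M1 where B1: "\<forall>x\<in>K. 0 < L x \<longrightarrow> (1 - \<phi> x) / L x \<le> M1" by blast
  have lmL: "linear (\<lambda>x. - L x)" using lL by (simp add: linear_compose_neg)
  have "\<exists>M. \<forall>x\<in>K. 0 < - L x \<longrightarrow> (1 - \<phi> x) / (- L x) \<le> M"
  proof (cases "K' = {}")
    case True
    have "(1 - \<phi> x) / (- L x) \<le> 1 / \<epsilon>" if "x \<in> K" "0 < - L x" for x
    proof -
      have "\<phi> x = 0" using True unfolding \<phi>_def ws''_def by (cases Ls) auto
      moreover have "\<epsilon> \<le> - L x" using True that unfolding K'_def by auto
      moreover have "1 / (- L x) \<le> 1 / \<epsilon>" by (rule divide_left_mono) (use calculation e in \<open>auto intro!: mult_neg_pos\<close>)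
      ultimately show ?thesis by simp
    qed
    then show ?thesis by blast
  next
    case False
    then obtain y0 where "y0 \<in> K" "\<bar>L y0\<bar> < \<epsilon>" unfolding K'_def by auto
    then show ?thesis using bound1[OF lmL lp cK _ e, of y0] H by auto
  qed
  then obtain M where "\<forall>x\<in>K. 0 < - L x \<longrightarrow> (1 - \<phi> x) / (- L x) \<le> M" by blast
  then have B2: "\<forall>x\<in>K. L x < 0 \<longrightarrow> - M \<le> (\<phi> x - 1) / (- L x)"
  proof (intro ballI impI)
    fix x assume "\<forall>x\<in>K. 0 < - L x \<longrightarrow> (1 - \<phi> x) / (- L x) \<le> M" "x \<in> K" "L x < 0"
    then have h: "(1 - \<phi> x) / (- L x) \<le> M" by auto
    have "(\<phi> x - 1) / (- L x) = - ((1 - \<phi> x) / (- L x))"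
      by (simp only: minus_divide_left minus_diff_eq)
    then show "- M \<le> (\<phi> x - 1) / (- L x)" using h by linarith
  qed
  obtain lam where lam: "\<forall>x\<in>K. 1 \<le> lam * L x + \<phi> x"
    using lam_exists[OF lL lp cK H e B1 B2] by blast
  have "\<forall>x\<in>K. 1 \<le> lc (L # Ls) (lam # ws'') x"
  proof
    fix x assume "x \<in> K"
    then have "1 \<le> lam * L x + \<phi> x" using lam by blast
    then show "1 \<le> lc (L # Ls) (lam # ws'') x" unfolding \<phi>_def by (simp only: lc.simps(1))
  qed
  then show ?case by blast
qed




context
  fixes s :: "'b::real_vector \<Rightarrow> 'b \<Rightarrow> real"
  assumes sb: "sym_bilinear s"
begin

lemma sb_sym: "s x y = s y x" using sb unfolding sym_bilinear_def by auto
lemma sb_lin1: "linear (\<lambda>x. s x c)" using sb unfolding sym_bilinear_def by auto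
lemma sb_add1: "s (x + y) c = s x c + s y c" using linear_add[OF sb_lin1] by simp
lemma sb_diff1: "s (x - y) c = s x c - s y c" using linear_diff[OF sb_lin1] by simp
lemma sb_scale1: "s (r *\<^sub>R x) c = r * s x c" using linear_scale[OF sb_lin1] by simp
lemma sb_zero1: "s 0 c = 0" using linear_0[OF sb_lin1] by simp
lemma sb_add2: "s c (x + y) = s c x + s c y" by (simp add: sb_sym[of c] sb_add1)
lemma sb_diff2: "s c (x - y) = s c x - s c y" by (simp add: sb_sym[of c] sb_diff1)
lemma sb_scale2: "s c (r *\<^sub>R x) = r * s c x" by (simp add: sb_sym[of c] sb_scale1)
lemma sb_zero2: "s c 0 = 0" by (simp add: sb_sym[of c] sb_zero1)
lemma sb_neg2: "s c (- x) = - s c x" using sb_scale2[of c "-1" x] by simp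

lemma qf_diff: "qf s (x - y) = qf s x + qf s y - s x y"
  unfolding qf_def by (simp add: sb_diff1 sb_diff2 sb_sym[of y x] field_simps)

lemma qf_pos_ineq: "qf s (x - y) \<ge> 0 \<Longrightarrow> s x y - qf s y \<le> qf s x"
  using qf_diff[of x y] by simp

end

lemma topspace_wBB:
  fixes s :: "'b::real_vector \<Rightarrow> 'b \<Rightarrow> real"
  shows "topspace (wBB s) = UNIV"
  unfolding wBB_def topology_generated_by_topspace
  by (auto intro!: exI[of _ "(\<lambda>b. s b 0) -` UNIV"])

lemma wBB_nbhd:
  assumes "openin (wBB s) U" "x \<in> U"
  shows "\<exists>cs \<epsilon>. \<epsilon> > 0 \<and> (\<forall>y. (\<forall>c\<in>set cs. \<bar>s y c - s x c\<bar> < \<epsilon>) \<longrightarrow> y \<in> U)"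
proof -
  have g: "generate_topology_on {(\<lambda>b. s b c) -` U | c U. open U} U"
    using assms(1) unfolding wBB_def by (simp add: openin_topology_generated_by_iff)
  have "\<forall>x\<in>U. \<exists>cs \<epsilon>. \<epsilon> > 0 \<and> (\<forall>y. (\<forall>c\<in>set cs. \<bar>s y c - s x c\<bar> < \<epsilon>) \<longrightarrow> y \<in> U)"
    using g
  proof (induction rule: generate_topology_on.induct)
    case Empty
    then show ?case by simp
  next
    case (Int a b)
    show ?case
    proof
      fix x assume "x \<in> a \<inter> b"
      then obtain cs1 e1 cs2 e2 where 1: "e1 > 0" "\<forall>y. (\<forall>c\<in>set cs1. \<bar>s y c - s x c\<bar> < e1) \<longrightarrow> y \<in> a"
        and 2: "e2 > 0" "\<forall>y. (\<forall>c\<in>set cs2. \<bar>s y c - s x c\<bar> < e2) \<longrightarrow> y \<in> b"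
        using Int.IH by blast
      show "\<exists>cs \<epsilon>. \<epsilon> > 0 \<and> (\<forall>y. (\<forall>c\<in>set cs. \<bar>s y c - s x c\<bar> < \<epsilon>) \<longrightarrow> y \<in> a \<inter> b)"
        apply (rule exI[of _ "cs1 @ cs2"], rule exI[of _ "min e1 e2"])
        using 1 2 by auto
    qed
  next
    case (UN K)
    then show ?case by blast
  next
    case (Basis s0)
    then obtain c V where sV: "s0 = (\<lambda>b. s b c) -` V" "open V" by blast
    show ?case
    proof
      fix x assume "x \<in> s0"
      then have "s x c \<in> V" using sV by auto
      then obtain e where e: "e > 0" "\<forall>y. dist y (s x c) < e \<longrightarrow> y \<in> V"
        using sV(2) unfolding open_dist by blast
      show "\<exists>cs \<epsilon>. \<epsilon> > 0 \<and> (\<forall>y. (\<forall>c\<in>set cs. \<bar>s y c - s x c\<bar> < \<epsilon>) \<longrightarrow> y \<in> s0)"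
      proof (rule exI[of _ "[c]"], rule exI[of _ e], rule conjI)
        show "e > 0" using e by simp
      next
        show "\<forall>y. (\<forall>c'\<in>set [c]. \<bar>s y c' - s x c'\<bar> < e) \<longrightarrow> y \<in> s0"
        proof (intro allI impI)
          fix y assume "\<forall>c'\<in>set [c]. \<bar>s y c' - s x c'\<bar> < e"
          then have "\<bar>s y c - s x c\<bar> < e" by simp
          then have "s y c \<in> V" using e(2) unfolding dist_real_def by blast
          then show "y \<in> s0" using sV(1) by simp
        qed
      qed
    qed
  qed
  then show ?thesis using assms(2) by blast
qed

lemma epi_convex:
  fixes f :: "'b::real_vector \<Rightarrow> ereal"
  assumes conv: "\<forall>x y t. 0 < t \<and> t < 1 \<longrightarrow>
        f (t *\<^sub>R x + (1 - t) *\<^sub>R y) \<le> ereal t * f x + ereal (1 - t) * f y"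
  shows "convex {p. f (fst p + b) \<le> ereal (snd p + r)}"
  unfolding convex_def
proof (intro ballI allI impI)
  fix p1 p2 :: "'b \<times> real" and u v :: real
  assume p1: "p1 \<in> {p. f (fst p + b) \<le> ereal (snd p + r)}" and p2: "p2 \<in> {p. f (fst p + b) \<le> ereal (snd p + r)}"
    and uv: "0 \<le> u" "0 \<le> v" "u + v = 1"
  show "u *\<^sub>R p1 + v *\<^sub>R p2 \<in> {p. f (fst p + b) \<le> ereal (snd p + r)}"
  proof (cases "u = 0 \<or> v = 0")
    case True
    then show ?thesis using p1 p2 uv by auto
  next
    case False
    then have u: "0 < u" "u < 1" and v: "v = 1 - u" using uv by auto
    define x1 where "x1 = fst p1 + b"
    define x2 where "x2 = fst p2 + b"
    define t1 where "t1 = snd p1 + r"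
    define t2 where "t2 = snd p2 + r"
    have e1: "fst (u *\<^sub>R p1 + v *\<^sub>R p2) + b = u *\<^sub>R x1 + (1 - u) *\<^sub>R x2"
      unfolding x1_def x2_def v by (simp add: algebra_simps)
    have e2: "snd (u *\<^sub>R p1 + v *\<^sub>R p2) + r = u * t1 + (1 - u) * t2"
      unfolding t1_def t2_def v by (simp add: algebra_simps)
    have f1: "f x1 \<le> ereal t1" and f2: "f x2 \<le> ereal t2" using p1 p2 unfolding x1_def x2_def t1_def t2_def by auto
    have "f (u *\<^sub>R x1 + (1 - u) *\<^sub>R x2) \<le> ereal u * f x1 + ereal (1 - u) * f x2"
      using conv[rule_format, of u x1 x2] u by simp
    also have "\<dots> \<le> ereal u * ereal t1 + ereal (1 - u) * ereal t2"
    proof (rule add_mono)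
      show "ereal u * f x1 \<le> ereal u * ereal t1" by (rule ereal_mult_left_mono[OF f1]) (use u in simp)
      show "ereal (1 - u) * f x2 \<le> ereal (1 - u) * ereal t2" by (rule ereal_mult_left_mono[OF f2]) (use u in simp)
    qed
    also have "\<dots> = ereal (u * t1 + (1 - u) * t2)" by simp
    finally show ?thesis unfolding mem_Collect_eq e1 e2 .
  qed
qed




fun lcv :: "'b::real_vector list \<Rightarrow> real list \<Rightarrow> 'b" where
  "lcv (c#cs) (w#ws) = w *\<^sub>R c + lcv cs ws"
| "lcv _ _ = 0"

lemma lc_map:
  assumes sb: "sym_bilinear s"
  shows "lc (map (\<lambda>c p. s (fst p) c) cs) ws p = s (fst p) (lcv cs ws)"
proof (induction cs arbitrary: ws)
  case Nil
  then show ?case by (simp add: sb_zero2[OF sb])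
next
  case (Cons c cs)
  then show ?case by (cases ws) (simp_all add: sb_zero2[OF sb] sb_add2[OF sb] sb_scale2[OF sb])
qed

lemma minorant:
  fixes s :: "'b::real_vector \<Rightarrow> 'b \<Rightarrow> real" and f :: "'b \<Rightarrow> ereal"
  assumes sb: "sym_bilinear s"
    and conv: "\<forall>x y t. 0 < t \<and> t < 1 \<longrightarrow> f (t *\<^sub>R x + (1 - t) *\<^sub>R y) \<le> ereal t * f x + ereal (1 - t) * f y"
    and lsc: "lsc_on (wBB s) f"
    and qp: "q_positive s A"
    and fA: "\<forall>a\<in>A. f a = ereal (qf s a)"
    and fb: "ereal (qf s b) < f b"
  shows "\<exists>c \<beta>. (\<forall>a\<in>A. s a c - \<beta> \<le> qf s a) \<and> qf s b < s b c - \<beta>"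
proof -
  define qb where "qb = qf s b"
  obtain r0 where r0: "ereal qb < ereal r0" "ereal r0 < f b" using ereal_dense2[OF fb] unfolding qb_def by blast
  have "closedin (wBB s) {x \<in> topspace (wBB s). f x \<le> ereal r0}" using lsc unfolding lsc_on_def by blast
  then have op: "openin (wBB s) (UNIV - {x. f x \<le> ereal r0})" unfolding closedin_def topspace_wBB by simp
  have bU: "b \<in> UNIV - {x. f x \<le> ereal r0}" using r0(2) by (simp add: not_le)
  obtain cs \<epsilon> where e: "\<epsilon> > 0"
    and nb: "\<forall>y. (\<forall>c\<in>set cs. \<bar>s y c - s b c\<bar> < \<epsilon>) \<longrightarrow> y \<in> UNIV - {x. f x \<le> ereal r0}"
    using wBB_nbhd[OF op bU] by blast
  define \<delta> where "\<delta> = r0 - qb"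
  have d: "\<delta> > 0" using r0 by (simp add: \<delta>_def)
  define e' where "e' = min \<epsilon> \<delta>"
  have e': "e' > 0" using e d by (simp add: e'_def)
  define K where "K = {p. f (fst p + b) \<le> ereal (snd p + qb)}"
  have cK: "convex K" unfolding K_def by (rule epi_convex[OF conv])
  define Ls where "Ls = (\<lambda>p. snd p) # map (\<lambda>c p. s (fst p) c) cs"
  have lin: "\<forall>L\<in>set Ls. linear L"
  proof -
    have "linear (\<lambda>p::'b \<times> real. snd p)" by (simp add: linear_iff)
    moreover have "linear (\<lambda>p::'b \<times> real. s (fst p) c)" for c
      by (simp add: linear_iff sb_add1[OF sb] sb_scale1[OF sb])
    ultimately show ?thesis unfolding Ls_def by auto
  qed
  have box: "\<forall>p\<in>K. \<exists>L\<in>set Ls. e' \<le> \<bar>L p\<bar>"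
  proof
    fix p assume pK: "p \<in> K"
    show "\<exists>L\<in>set Ls. e' \<le> \<bar>L p\<bar>"
    proof (cases "\<forall>c\<in>set cs. \<bar>s (fst p) c\<bar> < e'")
      case True
      define y where "y = fst p + b"
      have "\<forall>c\<in>set cs. \<bar>s y c - s b c\<bar> < \<epsilon>"
        using True unfolding y_def e'_def by (auto simp: sb_add1[OF sb])
      then have "\<not> f y \<le> ereal r0" using nb by blast
      moreover have "f y \<le> ereal (snd p + qb)" using pK unfolding K_def y_def by simp
      ultimately have "ereal r0 < ereal (snd p + qb)" by (meson not_le less_le_trans)
      then have "\<delta> < snd p" unfolding \<delta>_def by simp
      then have "e' \<le> \<bar>snd p\<bar>" unfolding e'_def by linarith
      then show ?thesis unfolding Ls_def by auto
    next
      case False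
      then obtain c where "c \<in> set cs" "e' \<le> \<bar>s (fst p) c\<bar>" by force
      then show ?thesis unfolding Ls_def by auto
    qed
  qed
  obtain ws where ws: "\<forall>p\<in>K. 1 \<le> lc Ls ws p" using box_sep[OF lin cK e' box] by blast
  obtain a0 where a0: "a0 \<in> A" using qp unfolding q_positive_def by blast
  have KA: "(a - b, t - qb) \<in> K" if "a \<in> A" "qf s a \<le> t" for a t
    using that fA unfolding K_def by auto
  show ?thesis
  proof (cases ws)
    case Nil
    have "1 \<le> lc Ls ws (a0 - b, qf s a0 - qb)" using ws KA[OF a0] by blast
    then show ?thesis using Nil unfolding Ls_def by simp
  next
    case (Cons w0 ws')
    define C where "C = lcv cs ws'"
    have key: "1 \<le> w0 * (t - qb) + s (a - b) C" if "a \<in> A" "qf s a \<le> t" for a t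
    proof -
      have "1 \<le> lc Ls ws (a - b, t - qb)" using ws KA[OF that] by blast
      then show ?thesis unfolding Cons Ls_def C_def using lc_map[OF sb, of cs ws' "(a - b, t - qb)"]
        by simp
    qed
    consider "w0 < 0" | "w0 > 0" | "w0 = 0" by linarith
    then show ?thesis
    proof cases
      case 1
      define X where "X = s (a0 - b) C"
      define t where "t = max (qf s a0) (qb + X / (- w0))"
      have "1 \<le> w0 * (t - qb) + X" using key[OF a0, of t] unfolding t_def X_def by simp
      moreover have "w0 * (t - qb) \<le> w0 * (X / (- w0))"
        by (rule mult_left_mono_neg) (use 1 in \<open>auto simp: t_def\<close>)
      moreover have "w0 * (X / (- w0)) = - X" using 1 by simp
      ultimately show ?thesis by linarith
    next
      case 2
      define c where "c = (- (1 / w0)) *\<^sub>R C"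
      define \<beta> where "\<beta> = - (qb + 1 / w0 + s b C / w0)"
      have sc: "s x c - \<beta> = qb + (1 - s (x - b) C) / w0" for x
        unfolding c_def \<beta>_def using 2
        by (simp add: sb_scale2[OF sb] sb_neg2[OF sb] sb_diff1[OF sb] field_simps)
      have "s a c - \<beta> \<le> qf s a" if aA: "a \<in> A" for a
      proof -
        have "1 \<le> w0 * (qf s a - qb) + s (a - b) C" using key[OF aA] by simp
        then have "1 - s (a - b) C \<le> w0 * (qf s a - qb)" by simp
        then have "(1 - s (a - b) C) / w0 \<le> qf s a - qb" using 2 by (simp add: divide_simps mult.commute)
        then show ?thesis unfolding sc by simp
      qed
      moreover have "qf s b < s b c - \<beta>" unfolding sc qb_def using 2 by (simp add: sb_zero1[OF sb])
      ultimately show ?thesis by blast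
    next
      case 3
      have k3: "1 \<le> s (a - b) C" if "a \<in> A" for a using key[OF that, of "qf s a"] 3 by simp
      define T where "T = max 0 (qb - s b a0 + qf s a0 + 1)"
      define c where "c = a0 - T *\<^sub>R C"
      define \<beta> where "\<beta> = qf s a0 - T * (s b C + 1)"
      have sc: "s x c - \<beta> = (s x a0 - qf s a0) + T * (1 - s (x - b) C)" for x
        unfolding c_def \<beta>_def
        by (simp add: sb_scale2[OF sb] sb_diff1[OF sb] sb_diff2[OF sb] algebra_simps)
      have "s a c - \<beta> \<le> qf s a" if aA: "a \<in> A" for a
      proof -
        have "T * (1 - s (a - b) C) \<le> 0" using k3[OF aA] by (simp add: T_def mult_nonneg_nonpos)
        moreover have "s a a0 - qf s a0 \<le> qf s a"
          using qf_pos_ineq[OF sb] qp aA a0 unfolding q_positive_def by blast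
        ultimately show ?thesis unfolding sc by linarith
      qed
      moreover have "qf s b < s b c - \<beta>"
      proof -
        have "s b c - \<beta> = s b a0 - qf s a0 + T" unfolding sc by (simp add: sb_zero1[OF sb])
        moreover have "T \<ge> qb - s b a0 + qf s a0 + 1" by (simp add: T_def)
        ultimately show ?thesis unfolding qb_def by linarith
      qed
      ultimately show ?thesis by blast
    qed
  qed
qed




locale ssdA =
  fixes s :: "'b::real_vector \<Rightarrow> 'b \<Rightarrow> real" and A :: "'b set"
  assumes sb: "sym_bilinear s" and qp: "q_positive s A"
begin

abbreviation "P \<equiv> Phi s A"
abbreviation "F \<equiv> conj_at s (Phi s A)"

lemma Ane: "A \<noteq> {}" using qp unfolding q_positive_def by blast

lemma qpos: "a \<in> A \<Longrightarrow> a' \<in> A \<Longrightarrow> qf s (a - a') \<ge> 0"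
  using qp unfolding q_positive_def by blast

lemma qf_self: "s x x - qf s x = qf s x" unfolding qf_def by simp

lemma P_A: "a \<in> A \<Longrightarrow> P a = ereal (qf s a)"
proof -
  assume aA: "a \<in> A"
  have "P a \<le> ereal (qf s a)" unfolding Phi_def
  proof (rule SUP_least)
    fix a' assume "a' \<in> A"
    then show "ereal (s a a' - qf s a') \<le> ereal (qf s a)"
      using qf_pos_ineq[OF sb qpos[OF aA]] by simp
  qed
  moreover have "ereal (s a a - qf s a) \<le> P a" unfolding Phi_def by (rule SUP_upper[OF aA])
  ultimately show ?thesis using qf_self[of a] by simp
qed

lemma P_lower: "a \<in> A \<Longrightarrow> ereal (s c a - qf s a) \<le> P c"
  unfolding Phi_def by (rule SUP_upper)

lemma P_real: "\<exists>p. P c = ereal p \<or> P c = \<infinity>"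
proof -
  obtain a where "a \<in> A" using Ane by blast
  then have "P c \<noteq> -\<infinity>" using P_lower[of a c] by auto
  then show ?thesis by (cases "P c") auto
qed

lemma F_lower: "ereal (s c b) - P c \<le> F b"
  unfolding conj_at_def by (rule SUP_upper) simp

lemma F_ge_P: "P b \<le> F b"
  unfolding Phi_def[of s A b]
proof (rule SUP_least)
  fix a assume aA: "a \<in> A"
  have "ereal (s b a - qf s a) = ereal (s a b) - P a" using P_A[OF aA] sb_sym[OF sb, of a b] by simp
  then show "ereal (s b a - qf s a) \<le> F b" using F_lower[of a b] by simp
qed

lemma F_ge_q: "ereal (qf s b) \<le> F b"
proof (cases "P b \<le> ereal (qf s b)")
  case True
  obtain p where p: "P b = ereal p \<or> P b = \<infinity>" using P_real by blast
  then have pb: "P b = ereal p" using True by auto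
  then have "p \<le> qf s b" using True by simp
  then have "ereal (qf s b) \<le> ereal (s b b) - P b" unfolding pb using qf_self[of b] by simp
  then show ?thesis using F_lower[of b b] by simp
next
  case False
  then show ?thesis using F_ge_P[of b] by simp
qed

lemma F_A: "a \<in> A \<Longrightarrow> F a = ereal (qf s a)"
proof -
  assume aA: "a \<in> A"
  have "F a \<le> ereal (qf s a)" unfolding conj_at_def
  proof (rule SUP_least)
    fix c
    obtain p where "P c = ereal p \<or> P c = \<infinity>" using P_real by blast
    moreover have "ereal (s c a - qf s a) \<le> P c" by (rule P_lower[OF aA])
    ultimately show "ereal (s c a) - P c \<le> ereal (qf s a)" by auto
  qed
  then show ?thesis using F_ge_q[of a] by simp
qed

lemma F_conv: "\<forall>x y t. 0 < t \<and> t < 1 \<longrightarrow> F (t *\<^sub>R x + (1 - t) *\<^sub>R y) \<le> ereal t * F x + ereal (1 - t) * F y"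
proof (intro allI impI, elim conjE)
  fix x y and t :: real assume t: "0 < t" "t < 1"
  show "F (t *\<^sub>R x + (1 - t) *\<^sub>R y) \<le> ereal t * F x + ereal (1 - t) * F y"
    unfolding conj_at_def[of s P "t *\<^sub>R x + (1 - t) *\<^sub>R y"]
  proof (rule SUP_least)
    fix c
    obtain p where "P c = ereal p \<or> P c = \<infinity>" using P_real by blast
    then show "ereal (s c (t *\<^sub>R x + (1 - t) *\<^sub>R y)) - P c \<le> ereal t * F x + ereal (1 - t) * F y"
    proof
      assume "P c = \<infinity>" then show ?thesis by simp
    next
      assume pc: "P c = ereal p"
      have 1: "ereal (s c x - p) \<le> F x" using F_lower[of c x] pc by simp
      have 2: "ereal (s c y - p) \<le> F y" using F_lower[of c y] pc by simp
      have "ereal (s c (t *\<^sub>R x + (1 - t) *\<^sub>R y)) - P c = ereal t * ereal (s c x - p) + ereal (1 - t) * ereal (s c y - p)"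
      proof -
        have "s c (t *\<^sub>R x + (1 - t) *\<^sub>R y) = t * s c x + (1 - t) * s c y"
          by (simp only: sb_add2[OF sb] sb_scale2[OF sb])
        then show ?thesis unfolding pc by (simp add: algebra_simps)
      qed
      also have "\<dots> \<le> ereal t * F x + ereal (1 - t) * F y"
      proof (rule add_mono)
        show "ereal t * ereal (s c x - p) \<le> ereal t * F x" by (rule ereal_mult_left_mono[OF 1]) (use t in simp)
        show "ereal (1 - t) * ereal (s c y - p) \<le> ereal (1 - t) * F y" by (rule ereal_mult_left_mono[OF 2]) (use t in simp)
      qed
      finally show ?thesis .
    qed
  qed
qed

lemma F_proper: "proper_convex F"
proof -
  have "\<forall>x. F x \<noteq> -\<infinity>" using F_ge_q by (metis MInfty_neq_ereal(1) ereal_infty_less_eq(2))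
  moreover obtain a where "a \<in> A" using Ane by blast
  then have "F a \<noteq> \<infinity>" using F_A by simp
  then have "\<exists>x. F x \<noteq> \<infinity>" by blast
  ultimately show ?thesis unfolding proper_convex_def using F_conv by blast
qed

lemma F_lsc: "lsc_on (wBB s) F"
  unfolding lsc_on_def
proof
  fix t :: real
  define G where "G c = {x. ereal t < ereal (s c x) - P c}" for c
  have eq: "topspace (wBB s) - {x \<in> topspace (wBB s). F x \<le> ereal t} = (\<Union>c. G c)"
  proof -
    have iff: "(\<not> F x \<le> ereal t) \<longleftrightarrow> (\<exists>c. ereal t < ereal (s c x) - P c)" for x
      unfolding conj_at_def not_le less_SUP_iff by simp
    show ?thesis unfolding topspace_wBB G_def using iff by auto
  qed
  have "openin (wBB s) (G c)" for c
  proof -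
    obtain p where "P c = ereal p \<or> P c = \<infinity>" using P_real by blast
    then show ?thesis
    proof
      assume "P c = \<infinity>"
      then have "G c = {}" unfolding G_def by simp
      then show ?thesis by simp
    next
      assume pc: "P c = ereal p"
      have e1: "(ereal t < ereal (s c x) - ereal p) = (t + p < s x c)" for x
        using sb_sym[OF sb, of c x] by (simp add: less_diff_eq)
      have "x \<in> G c \<longleftrightarrow> x \<in> (\<lambda>b. s b c) -` {t + p<..}" for x
        unfolding G_def pc e1 by simp
      then have "G c = (\<lambda>b. s b c) -` {t + p<..}" by blast
      moreover have "(\<lambda>b. s b c) -` {t + p<..} \<in> {(\<lambda>b. s b c) -` U | c U. open U}"
      proof -
        have o: "open {t + p<..}" by (rule open_greaterThan)
        show ?thesis unfolding mem_Collect_eq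
          by (rule exI[of _ c], rule exI[of _ "{t + p<..}"]) (simp add: o)
      qed
      ultimately have mem: "G c \<in> {(\<lambda>b. s b c) -` U | c U. open U}" by simp
      show ?thesis unfolding wBB_def by (rule topology_generated_by_Basis[OF mem])
    qed
  qed
  then have "openin (wBB s) (\<Union>c. G c)" by auto
  then show "closedin (wBB s) {x \<in> topspace (wBB s). F x \<le> ereal t}"
    unfolding closedin_def eq by auto
qed

lemma PqF_qpos: "q_positive s (Pq s F)"
  unfolding q_positive_def
proof (intro conjI ballI)
  obtain a where "a \<in> A" using Ane by blast
  then show "Pq s F \<noteq> {}" unfolding Pq_def using F_A by auto
next
  fix b1 b2 assume b1: "b1 \<in> Pq s F" and b2: "b2 \<in> Pq s F"
  define m where "m = (1/2) *\<^sub>R b1 + (1 - 1/2) *\<^sub>R b2"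
  have "F m \<le> ereal (1/2) * F b1 + ereal (1 - 1/2) * F b2" unfolding m_def using F_conv[rule_format, of "1/2" b1 b2] by simp
  also have "\<dots> = ereal ((qf s b1 + qf s b2) / 2)" using b1 b2 unfolding Pq_def by simp
  finally have Fm: "F m \<le> ereal ((qf s b1 + qf s b2) / 2)" .
  have "ereal (qf s m) \<le> ereal ((qf s b1 + qf s b2) / 2)" using F_ge_q[of m] Fm by (rule order_trans)
  then have le: "qf s m \<le> (qf s b1 + qf s b2) / 2" by simp
  have "qf s m = (s b1 b1 + 2 * s b1 b2 + s b2 b2) / 8"
    unfolding m_def qf_def by (simp add: sb_add1[OF sb] sb_add2[OF sb] sb_scale1[OF sb] sb_scale2[OF sb] sb_sym[OF sb, of b2 b1] field_simps)
  moreover have "qf s (b1 - b2) = (s b1 b1 - 2 * s b1 b2 + s b2 b2) / 2"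
    unfolding qf_def by (simp add: sb_diff1[OF sb] sb_diff2[OF sb] sb_sym[OF sb, of b2 b1] field_simps)
  ultimately show "0 \<le> qf s (b1 - b2)" using le unfolding qf_def by (simp add: field_simps)
qed

lemma minimal:
  assumes "q_representable s C" "A \<subseteq> C"
  shows "Pq s F \<subseteq> C"
proof
  fix b assume bF: "b \<in> Pq s F"
  obtain f where lsc: "lsc_on (wBB s) f" and pc: "proper_convex f" and fq: "\<forall>b. f b \<ge> ereal (qf s b)"
    and PC: "Pq s f = C" using assms(1) unfolding q_representable_def by blast
  have fA: "\<forall>a\<in>A. f a = ereal (qf s a)" using assms(2) PC unfolding Pq_def by auto
  show "b \<in> C"
  proof (rule ccontr)
    assume "b \<notin> C"
    then have "f b \<noteq> ereal (qf s b)" using PC unfolding Pq_def by auto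
    then have fb: "ereal (qf s b) < f b" using fq[rule_format, of b] by simp
    have conv: "\<forall>x y t. 0 < t \<and> t < 1 \<longrightarrow> f (t *\<^sub>R x + (1 - t) *\<^sub>R y) \<le> ereal t * f x + ereal (1 - t) * f y"
      using pc unfolding proper_convex_def by blast
    obtain c \<beta> where cb: "\<forall>a\<in>A. s a c - \<beta> \<le> qf s a" and cbb: "qf s b < s b c - \<beta>"
      using minorant[OF sb conv lsc qp fA fb] by blast
    have "P c \<le> ereal \<beta>" unfolding Phi_def
    proof (rule SUP_least)
      fix a assume "a \<in> A"
      then show "ereal (s c a - qf s a) \<le> ereal \<beta>" using cb sb_sym[OF sb, of a c] by force
    qed
    moreover obtain p where "P c = ereal p \<or> P c = \<infinity>" using P_real by blast
    ultimately obtain p where pc: "P c = ereal p" "p \<le> \<beta>" by auto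
    have h1: "ereal (s c b - p) \<le> F b" using F_lower[of c b] pc by simp
    have "ereal (s c b - \<beta>) \<le> ereal (s c b - p)" using pc by simp
    then have "ereal (s c b - \<beta>) \<le> F b" using h1 by (rule order_trans)
    moreover have "F b = ereal (qf s b)" using bF unfolding Pq_def by simp
    ultimately show False using cbb sb_sym[OF sb, of b c] by simp
  qed
qed

end



theorem mainTheorem8:
  fixes s :: "'b::real_vector \<Rightarrow> 'b \<Rightarrow> real" and A :: "'b set"
  assumes "SSD_space s"
    and "q_positive s A"
  shows "q_representable s (Pq s (conj_at s (Phi s A)))
       \<and> A \<subseteq> Pq s (conj_at s (Phi s A))
       \<and> (\<forall>C. q_representable s C \<and> A \<subseteq> C \<longrightarrow> Pq s (conj_at s (Phi s A)) \<subseteq> C)"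
proof -
  have sb: "sym_bilinear s" using assms(1) unfolding SSD_space_def by blast
  interpret ssdA s A using sb assms(2) by unfold_locales
  have 1: "q_representable s (Pq s (conj_at s (Phi s A)))"
    unfolding q_representable_def using PqF_qpos F_lsc F_proper F_ge_q by blast
  have 2: "A \<subseteq> Pq s (conj_at s (Phi s A))" unfolding Pq_def using F_A by auto
  have 3: "\<forall>C. q_representable s C \<and> A \<subseteq> C \<longrightarrow> Pq s (conj_at s (Phi s A)) \<subseteq> C"
    using minimal by blast
  show ?thesis using 1 2 3 by blast
qed

end
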